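(* Consider a birth-and-death process on $\{0,1,2,\dots\}$ whose birth rates $\lambda_n$ and death rates $\mu_n$ all belong to $(0,\infty)$. The process is transient if there exist $c>1$, an integer $K\ge1$ and a number $n_0$ such that for all $n>n_0$ $$\frac{\lambda_n}{\mu_n}\ge 1+\frac1n+\sum_{k=1}^{K-1}\frac{1}{n\prod_{j=1}^{k}\ln_{(j)}n}+\frac{c}{n\prod_{k=1}^{K}\ln_{(k)}n},$$ and it is recurrent if there exist an integer $K\ge1$ and a number $n_0$ such that for all $n>n_0$ $$\frac{\lambda_n}{\mu_n}\le 1+\frac1n+\sum_{k=1}^{K}\frac{1}{n\prod_{j=1}^{k}\ln_{(j)}n}.$$
   Context: $\ln_{(k)}x$ denotes the $k$-fold iterated natural logarithm: $\ln_{(1)}x=\ln x$ and $\ln_{(k)}x=\ln_{(k-1)}(\ln x)$ for $k\ge2$. An empty sum equals $0$. *)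

theory Defs
  imports Complex_Main
begin

fun iln :: "nat \<Rightarrow> real \<Rightarrow> real" where
  "iln 0 x = x"
| "iln (Suc k) x = ln (iln k x)"

text \<open>Birth-and-death process on {0,1,2,...} with birth rates lam n and death rates mu n.
  Recurrence/transience is that of its embedded jump chain: from state i > 0 it jumps
  to i+1 with probability lam i / (lam i + mu i) and to i-1 with probability
  mu i / (lam i + mu i); from state 0 it jumps to 1.
  bd_hit lam mu m i = probability, starting from i, of being in state 0 at some time <= m.\<close>
fun bd_hit :: "(nat \<Rightarrow> real) \<Rightarrow> (nat \<Rightarrow> real) \<Rightarrow> nat \<Rightarrow> nat \<Rightarrow> real" where
  "bd_hit lam mu 0 i = (if i = 0 then 1 else 0)"
| "bd_hit lam mu (Suc m) i =
     (if i = 0 then 1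
      else lam i / (lam i + mu i) * bd_hit lam mu m (Suc i)
         + mu i / (lam i + mu i) * bd_hit lam mu m (i - 1))"

text \<open>Probability of ever returning to 0 when started at 0 (the first jump goes to 1).\<close>
definition bd_return_prob :: "(nat \<Rightarrow> real) \<Rightarrow> (nat \<Rightarrow> real) \<Rightarrow> real" where
  "bd_return_prob lam mu = (SUP m. bd_hit lam mu m 1)"

definition bd_recurrent :: "(nat \<Rightarrow> real) \<Rightarrow> (nat \<Rightarrow> real) \<Rightarrow> bool" where
  "bd_recurrent lam mu \<longleftrightarrow> bd_return_prob lam mu = 1"

definition bd_transient :: "(nat \<Rightarrow> real) \<Rightarrow> (nat \<Rightarrow> real) \<Rightarrow> bool" where
  "bd_transient lam mu \<longleftrightarrow> \<not> bd_recurrent lam mu"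

end

theory Submission
  imports Defs "HOL-Real_Asymp.Real_Asymp"
begin


fun tw :: "nat \<Rightarrow> real" where
  "tw 0 = 0" | "tw (Suc k) = exp (tw k)"

lemma tw_nonneg: "tw k \<ge> 0" by (induction k) auto

lemma tw_Suc_ge: "tw k + 1 \<le> tw (Suc k)"
  by (simp add: add.commute)

lemma tw_mono: "k \<le> m \<Longrightarrow> tw k \<le> tw m"
proof (induction m)
  case 0 then show ?case by simp
next
  case (Suc m)
  then show ?case using tw_Suc_ge[of m] by (cases "k = Suc m") auto
qed

lemma iln_gt: "tw (k + j) < x \<Longrightarrow> tw k < iln j x"
proof (induction j arbitrary: k)
  case 0 then show ?case by simp
next
  case (Suc j)
  have "tw (Suc k) < iln j x" using Suc.IH[of "Suc k"] Suc.prems by simp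
  then have "exp (tw k) < iln j x" by simp
  moreover have "0 < exp (tw k)" by simp
  ultimately have "tw k < ln (iln j x)"
    by (metis exp_less_cancel_iff exp_ln less_trans)
  then show ?case by simp
qed

lemma iln_pos: "tw j < x \<Longrightarrow> 0 < iln j x"
  using iln_gt[of 0 j x] by simp

lemma iln_ge1: "tw (Suc j) < x \<Longrightarrow> 1 < iln j x"
  using iln_gt[of 1 j x] by simp

lemma iln_mono: "tw j < x \<Longrightarrow> x \<le> y \<Longrightarrow> iln j x \<le> iln j y"
proof (induction j)
  case 0 then show ?case by simp
next
  case (Suc j)
  have "tw j < x" using Suc.prems tw_Suc_ge[of j] by simp
  with Suc have "iln j x \<le> iln j y" by simp
  moreover have "0 < iln j x" using iln_ge1 Suc.prems by (meson less_trans zero_less_one)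
  ultimately show ?case by simp
qed

lemma iln_Suc_le: "tw (Suc j) < x \<Longrightarrow> iln (Suc j) x \<le> iln j x"
  using iln_ge1[of j x] by (simp add: ln_le_minus_one[of "iln j x"] ln_bound)

definition S :: "nat \<Rightarrow> real \<Rightarrow> real" where "S k x = (\<Sum>j=1..k. iln j x)"
definition ee :: "nat \<Rightarrow> real \<Rightarrow> real" where "ee k x = exp (- S k x)"

lemma S_Suc: "S (Suc k) x = S k x + iln (Suc k) x"
  by (simp add: S_def)

lemma iln_deriv: "tw k < x \<Longrightarrow> (iln k has_real_derivative ee k x) (at x)"
proof (induction k arbitrary: x)
  case 0 then show ?case by (simp add: ee_def S_def)
next
  case (Suc k)
  have tk: "tw k < x" using Suc.prems tw_Suc_ge[of k] by simp
  have p: "0 < iln k x" using iln_ge1 Suc.prems by (meson less_trans zero_less_one)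
  have e: "iln (Suc k) = (\<lambda>x. ln (iln k x))" by (rule ext) simp
  have "((\<lambda>x. ln (iln k x)) has_real_derivative (1 / iln k x) * ee k x) (at x)"
    by (rule DERIV_chain2[OF DERIV_ln_divide[OF p] Suc.IH[OF tk]])
  moreover have "(1 / iln k x) * ee k x = ee (Suc k) x"
    using p by (simp add: ee_def S_Suc exp_diff exp_minus field_simps)
  ultimately show ?case using e by simp
qed

lemma prod_exp: "tw (Suc k) < x \<Longrightarrow> x * (\<Prod>j=1..k. iln j x) = exp (S (Suc k) x)"
proof (induction k)
  case 0
  have "0 < x" using 0 by simp
  then show ?case by (simp add: S_def)
next
  case (Suc k)
  have tk: "tw (Suc k) < x" using Suc.prems tw_Suc_ge[of "Suc k"] by simp
  have p: "0 < iln (Suc k) x" using iln_ge1 Suc.prems by (meson less_trans zero_less_one)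
  have "x * (\<Prod>j=1..Suc k. iln j x) = (x * (\<Prod>j=1..k. iln j x)) * iln (Suc k) x"
    by (simp add: prod.cl_ivl_Suc mult.assoc)
  also have "\<dots> = exp (S (Suc k) x) * exp (ln (iln (Suc k) x))" using Suc.IH[OF tk] p by simp
  also have "\<dots> = exp (S (Suc (Suc k)) x)" by (simp add: S_Suc[of "Suc k"] exp_add)
  finally show ?case .
qed

lemma inv_prod: "tw (Suc k) < x \<Longrightarrow> 1 / (x * (\<Prod>j=1..k. iln j x)) = ee (Suc k) x"
  using prod_exp[of k x] by (simp add: ee_def exp_minus divide_inverse)

lemma iln_at_top: "filterlim (iln k) at_top at_top"
proof (induction k)
  case 0 then show ?case by (simp add: filterlim_ident)
next
  case (Suc k)
  have e: "iln (Suc k) = (\<lambda>x. ln (iln k x))" by (rule ext) simp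
  show ?case unfolding e by (rule filterlim_compose[OF ln_at_top Suc.IH])
qed

lemma S_mono: "tw k < x \<Longrightarrow> x \<le> y \<Longrightarrow> S k x \<le> S k y"
  unfolding S_def
proof (rule sum_mono)
  fix j assume "j \<in> {1..k}" "tw k < x" "x \<le> y"
  then show "iln j x \<le> iln j y" using iln_mono[of j x y] tw_mono[of j k] by auto
qed

lemma ee_anti: "tw k < x \<Longrightarrow> x \<le> y \<Longrightarrow> ee k y \<le> ee k x"
  using S_mono[of k x y] by (simp add: ee_def)

lemma S_deriv: "tw k < x \<Longrightarrow> (S k has_real_derivative (\<Sum>j=1..k. ee j x)) (at x)"
proof -
  assume a: "tw k < x"
  have "((\<lambda>x. \<Sum>j=1..k. iln j x) has_real_derivative (\<Sum>j=1..k. ee j x)) (at x)"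
  proof (rule DERIV_sum)
    fix j assume "j \<in> {1..k}"
    then have "tw j < x" using a tw_mono[of j k] by auto
    then show "((\<lambda>x. iln j x) has_real_derivative ee j x) (at x)" using iln_deriv by simp
  qed
  then show ?thesis by (simp add: S_def[abs_def])
qed

lemma mvt_dec:
  fixes f f' :: "real \<Rightarrow> real"
  assumes d: "\<And>t. a < t \<Longrightarrow> (f has_real_derivative f' t) (at t)"
    and dec: "\<And>s t. a < s \<Longrightarrow> s \<le> t \<Longrightarrow> f' t \<le> f' s"
    and ax: "a < x" and xy: "x < y"
  shows "(y - x) * f' y \<le> f y - f x \<and> f y - f x \<le> (y - x) * f' x"
proof -
  obtain z where z: "x < z" "z < y" "f y - f x = (y - x) * f' z"
    using MVT2[OF xy, of f f'] d ax by (meson less_le_trans)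
  have "f' y \<le> f' z" "f' z \<le> f' x" using dec z ax by auto
  then show ?thesis using z xy by (simp add: mult_left_mono)
qed



definition rho :: "(nat \<Rightarrow> real) \<Rightarrow> (nat \<Rightarrow> real) \<Rightarrow> nat \<Rightarrow> real" where
  "rho lam mu n = (\<Prod>i=1..n. mu i / lam i)"

lemma rho_Suc: "rho lam mu (Suc n) = rho lam mu n * (mu (Suc n) / lam (Suc n))"
  by (simp add: rho_def prod.cl_ivl_Suc)

lemma rho_0: "rho lam mu 0 = 1" by (simp add: rho_def)

lemma cancel_lem: "(s::real) \<noteq> 0 \<Longrightarrow> s * (a / s * u + b / s * v) = a * u + b * v"
  by (simp add: distrib_left)

context
  fixes lam mu :: "nat \<Rightarrow> real"
  assumes pos: "\<And>n. lam n > 0" "\<And>n. mu n > 0"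
begin

lemma rho_pos: "rho lam mu n > 0"
  unfolding rho_def using pos by (intro prod_pos) auto

lemma hit_bounds: "0 \<le> bd_hit lam mu m i \<and> bd_hit lam mu m i \<le> 1"
proof (induction m arbitrary: i)
  case 0 then show ?case by simp
next
  case (Suc m)
  show ?case
  proof (cases "i = 0")
    case True then show ?thesis by simp
  next
    case False
    define p where "p = lam i / (lam i + mu i)"
    define q where "q = mu i / (lam i + mu i)"
    have pq: "p \<ge> 0" "q \<ge> 0" "p + q = 1" using pos[of i]
      by (auto simp: p_def q_def add_divide_distrib[symmetric])
    have a: "0 \<le> bd_hit lam mu m (Suc i)" "bd_hit lam mu m (Suc i) \<le> 1"
       "0 \<le> bd_hit lam mu m (i-1)" "bd_hit lam mu m (i-1) \<le> 1" using Suc.IH by auto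
    have "p * bd_hit lam mu m (Suc i) \<le> p" using a pq by (simp add: mult_left_le)
    moreover have "q * bd_hit lam mu m (i-1) \<le> q" using a pq by (simp add: mult_left_le)
    ultimately show ?thesis using False pq a by (simp add: p_def[symmetric] q_def[symmetric])
  qed
qed

lemma hit_mono: "bd_hit lam mu m i \<le> bd_hit lam mu (Suc m) i"
proof (induction m arbitrary: i)
  case 0 then show ?case using hit_bounds[of "Suc 0" i] by auto
next
  case (Suc m)
  show ?case
  proof (cases "i = 0")
    case True then show ?thesis by simp
  next
    case False
    have p: "lam i / (lam i + mu i) \<ge> 0" "mu i / (lam i + mu i) \<ge> 0" using pos[of i] by auto
    have "lam i / (lam i + mu i) * bd_hit lam mu m (Suc i) \<le> lam i / (lam i + mu i) * bd_hit lam mu (Suc m) (Suc i)"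
      using Suc.IH[of "Suc i"] p by (intro mult_left_mono) 
    moreover have "mu i / (lam i + mu i) * bd_hit lam mu m (i-1) \<le> mu i / (lam i + mu i) * bd_hit lam mu (Suc m) (i-1)"
      using Suc.IH[of "i-1"] p by (intro mult_left_mono)
    ultimately show ?thesis using False by (simp only: bd_hit.simps if_False)
  qed
qed

lemma hit_lim: "(\<lambda>m. bd_hit lam mu m i) \<longlonglongrightarrow> (SUP m. bd_hit lam mu m i)"
proof (rule LIMSEQ_incseq_SUP)
  show "bdd_above (range (\<lambda>m. bd_hit lam mu m i))" using hit_bounds by (auto intro!: bdd_aboveI)
  show "incseq (\<lambda>m. bd_hit lam mu m i)" using hit_mono by (simp add: incseq_SucI)
qed

lemma recurrent_if: assumes ns: "\<not> summable (rho lam mu)" shows "bd_recurrent lam mu"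
proof -
  define h where "h i = (SUP m. bd_hit lam mu m i)" for i
  have L: "(\<lambda>m. bd_hit lam mu m i) \<longlonglongrightarrow> h i" for i using hit_lim h_def by simp
  have hb: "0 \<le> h i \<and> h i \<le> 1" for i
    using hit_bounds L[of i] by (meson LIMSEQ_le_const LIMSEQ_le_const2)
  have h0: "h 0 = 1"
  proof -
    have "(\<lambda>m. bd_hit lam mu m 0) = (\<lambda>m. 1)" by (rule ext) (case_tac m, auto)
    then show ?thesis using L[of 0] by (simp add: LIMSEQ_const_iff)
  qed
  have rec: "h i = lam i / (lam i + mu i) * h (Suc i) + mu i / (lam i + mu i) * h (i - 1)"
    if "i > 0" for i
  proof -
    have "(\<lambda>m. bd_hit lam mu (Suc m) i) \<longlonglongrightarrow> h i" using L[of i] by (rule LIMSEQ_Suc)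
    moreover have "(\<lambda>m. bd_hit lam mu (Suc m) i) \<longlonglongrightarrow>
        lam i / (lam i + mu i) * h (Suc i) + mu i / (lam i + mu i) * h (i - 1)"
    proof -
      have "lam i + mu i \<noteq> 0" using pos[of i] by (metis add_pos_pos less_irrefl)
      then show ?thesis using that by (simp only: bd_hit.simps) (auto intro!: tendsto_intros L)
    qed
    ultimately show ?thesis using LIMSEQ_unique by blast
  qed
  define d where "d i = h i - h (Suc i)" for i
  have dS: "d (Suc i) = d i * (mu (Suc i) / lam (Suc i))" for i
  proof -
    have r: "h (Suc i) = lam (Suc i) / (lam (Suc i) + mu (Suc i)) * h (Suc (Suc i)) + mu (Suc i) / (lam (Suc i) + mu (Suc i)) * h i"
      using rec[of "Suc i"] by simp
    have ne: "lam (Suc i) + mu (Suc i) \<noteq> 0" using pos[of "Suc i"] by (metis add_pos_pos less_irrefl)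
    have "(lam (Suc i) + mu (Suc i)) * h (Suc i) = lam (Suc i) * h (Suc (Suc i)) + mu (Suc i) * h i"
      by (subst r) (rule cancel_lem[OF ne])
    then have "lam (Suc i) * d (Suc i) = mu (Suc i) * d i" unfolding d_def by (simp add: algebra_simps)
    then show ?thesis using pos[of "Suc i"] by (simp add: field_simps)
  qed
  have drho: "d i = d 0 * rho lam mu i" for i
    by (induction i) (simp_all add: rho_0 rho_Suc dS)
  have hN: "h N = 1 - d 0 * (\<Sum>i<N. rho lam mu i)" for N
  proof (induction N)
    case 0 then show ?case by (simp add: h0)
  next
    case (Suc N)
    have "h (Suc N) = h N - d N" by (simp add: d_def)
    also have "\<dots> = 1 - d 0 * (\<Sum>i<Suc N. rho lam mu i)" using Suc drho[of N] by (simp add: algebra_simps)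
    finally show ?case .
  qed
  have "d 0 \<le> 0"
  proof (rule ccontr)
    assume "\<not> d 0 \<le> 0"
    then have d0: "d 0 > 0" by simp
    have "(\<Sum>i<N. rho lam mu i) \<le> 1 / d 0" for N
      using hN[of N] hb[of N] d0 by (simp add: field_simps)
    then have "summable (rho lam mu)" using rho_pos by (intro summableI_nonneg_bounded) (auto intro: less_imp_le)
    with ns show False by simp
  qed
  then have "h 1 = 1" using hb[of 1] h0 by (simp add: d_def)
  then show ?thesis by (simp add: bd_recurrent_def bd_return_prob_def h_def)
qed

lemma transient_if: assumes sm: "summable (rho lam mu)" shows "bd_transient lam mu"
proof -
  define T where "T = suminf (rho lam mu)"
  have psle: "(\<Sum>n<i. rho lam mu n) \<le> T" for i
    unfolding T_def using sm rho_pos by (intro sum_le_suminf) (auto intro: less_imp_le)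
  have T1: "T \<ge> 1" using psle[of 1] by (simp add: rho_0)
  define phi where "phi i = 1 - (\<Sum>n<i. rho lam mu n) / T" for i
  have phi_nn: "phi i \<ge> 0" for i using psle[of i] T1 by (simp add: phi_def field_simps)
  have harm: "lam i / (lam i + mu i) * phi (Suc i) + mu i / (lam i + mu i) * phi (i - 1) = phi i"
    if ip: "i > 0" for i
  proof -
    obtain j where j: "i = Suc j" using ip by (cases i) auto
    define p where "p = lam i / (lam i + mu i)"
    define q where "q = mu i / (lam i + mu i)"
    have ne: "lam i + mu i \<noteq> 0" using pos[of i] by (metis add_pos_pos less_irrefl)
    have pq: "p + q = 1" using ne by (simp add: p_def q_def add_divide_distrib[symmetric])
    have a: "phi (Suc i) = phi i - rho lam mu i / T" by (simp add: phi_def add_divide_distrib)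
    have b: "phi (i - 1) = phi i + rho lam mu j / T" by (simp add: phi_def j add_divide_distrib)
    have c: "lam i * rho lam mu i = mu i * rho lam mu j" using pos[of i] by (simp add: j rho_Suc)
    have c2: "p * (rho lam mu i / T) = q * (rho lam mu j / T)"
      unfolding p_def q_def using c by (simp add: field_simps)
    have "p * phi (Suc i) + q * phi (i - 1) = (p + q) * phi i - p * (rho lam mu i / T) + q * (rho lam mu j / T)"
      unfolding a b by (simp add: algebra_simps)
    also have "\<dots> = phi i" unfolding pq c2 by simp
    finally show ?thesis by (simp add: p_def q_def)
  qed
  have le: "bd_hit lam mu m i \<le> phi i" for m i
  proof (induction m arbitrary: i)
    case 0 then show ?case using phi_nn by (simp add: phi_def)
  next
    case (Suc m)
    show ?case
    proof (cases "i = 0")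
      case True then show ?thesis by (simp add: phi_def)
    next
      case False
      have p: "lam i / (lam i + mu i) \<ge> 0" "mu i / (lam i + mu i) \<ge> 0" using pos[of i] by auto
      have "lam i / (lam i + mu i) * bd_hit lam mu m (Suc i) \<le> lam i / (lam i + mu i) * phi (Suc i)"
        using Suc.IH p by (rule_tac mult_left_mono) auto
      moreover have "mu i / (lam i + mu i) * bd_hit lam mu m (i-1) \<le> mu i / (lam i + mu i) * phi (i-1)"
        using Suc.IH p by (rule_tac mult_left_mono) auto
      ultimately show ?thesis using False harm[of i] by simp
    qed
  qed
  have "bd_return_prob lam mu \<le> phi 1"
    unfolding bd_return_prob_def using le by (intro cSUP_least) auto
  moreover have "phi 1 < 1" using T1 by (simp add: phi_def rho_0)
  ultimately show ?thesis by (simp add: bd_transient_def bd_recurrent_def)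
qed

end


lemma D_anti:
  assumes "tw k < s" "s \<le> t"
  shows "(\<Sum>j=1..k. ee j t) \<le> (\<Sum>j=1..k. ee j s)"
proof (rule sum_mono)
  fix j assume "j \<in> {1..k}"
  then have "tw j < s" using assms tw_mono[of j k] by auto
  then show "ee j t \<le> ee j s" using ee_anti assms by simp
qed

lemma rec_analytic:
  fixes lam mu :: "nat \<Rightarrow> real"
  assumes pos: "\<And>n. lam n > 0" "\<And>n. mu n > 0"
    and Na: "tw k < real N"
    and hyp: "\<And>n. n \<ge> N \<Longrightarrow> lam n / mu n \<le> 1 + (\<Sum>j=1..k. ee j (real n))"
  shows "\<not> summable (rho lam mu)"
proof
  assume sm: "summable (rho lam mu)"
  have rp: "rho lam mu n > 0" for n by (rule rho_pos[of lam mu]) (use pos in auto)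
  define D where "D x = (\<Sum>j=1..k. ee j x)" for x
  have step: "lam (Suc n) / mu (Suc n) \<le> exp (S k (real (Suc n)) - S k (real n))" if "n \<ge> N" for n
  proof -
    have a: "tw k < real n" using Na that by (meson le_less_trans of_nat_le_iff order_less_le_trans)
    have "(real (Suc n) - real n) * D (real (Suc n)) \<le> S k (real (Suc n)) - S k (real n)"
      using mvt_dec[of "tw k" "S k" D "real n" "real (Suc n)"] a S_deriv D_anti
      unfolding D_def by auto
    then have "D (real (Suc n)) \<le> S k (real (Suc n)) - S k (real n)" by simp
    moreover have "lam (Suc n) / mu (Suc n) \<le> 1 + D (real (Suc n))" using hyp[of "Suc n"] that unfolding D_def by simp
    moreover have "1 + D (real (Suc n)) \<le> exp (D (real (Suc n)))" by simp
    ultimately show ?thesis by (meson exp_le_cancel_iff order_trans)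
  qed
  define C where "C = rho lam mu N * exp (S k (real N))"
  have Cpos: "C > 0" using rho_pos[OF pos] by (simp add: C_def)
  have low: "rho lam mu (N + m) \<ge> C * exp (- S k (real (N + m)))" for m
  proof (induction m)
    case 0 then show ?case by (simp add: C_def exp_minus mult.assoc)
  next
    case (Suc m)
    define n where "n = N + m"
    have r: "lam (Suc n) / mu (Suc n) \<le> exp (S k (real (Suc n)) - S k (real n))" using step[of n] n_def by simp
    have pq: "lam (Suc n) / mu (Suc n) > 0" using pos by simp
    have "mu (Suc n) / lam (Suc n) = 1 / (lam (Suc n) / mu (Suc n))" by simp
    also have "\<dots> \<ge> 1 / exp (S k (real (Suc n)) - S k (real n))"
      using r pq pos(1)[of "Suc n"] pos(2)[of "Suc n"] by (intro divide_left_mono) auto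
    finally have q: "mu (Suc n) / lam (Suc n) \<ge> exp (S k (real n) - S k (real (Suc n)))"
      by (simp add: exp_diff)
    have "rho lam mu (N + Suc m) = rho lam mu n * (mu (Suc n) / lam (Suc n))"
      by (simp add: n_def rho_Suc)
    also have "\<dots> \<ge> C * exp (- S k (real n)) * exp (S k (real n) - S k (real (Suc n)))"
      using Suc.IH q Cpos rp unfolding n_def
      by (intro mult_mono) (auto intro: less_imp_le)
    finally show ?case by (simp add: n_def mult.assoc exp_add[symmetric])
  qed
  have sm2: "summable (\<lambda>m. ee k (real (m + N)))"
  proof -
    have "summable (\<lambda>m. rho lam mu (m + N) / C)" using sm by (simp add: summable_divide)
    moreover have "norm (ee k (real (m + N))) \<le> rho lam mu (m + N) / C" for m
      using low[of m] Cpos by (simp add: ee_def field_simps add.commute)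
    ultimately show ?thesis by (rule summable_comparison_test'[where N=0])
  qed
  have tele: "(\<Sum>m<M. ee k (real (m + N))) \<ge> iln k (real (M + N)) - iln k (real N)" for M
  proof (induction M)
    case 0 then show ?case by simp
  next
    case (Suc M)
    have a: "tw k < real (M + N)" using Na by simp
    have "iln k (real (Suc M + N)) - iln k (real (M + N)) \<le> (real (Suc M + N) - real (M + N)) * ee k (real (M + N))"
      using mvt_dec[of "tw k" "iln k" "ee k" "real (M + N)" "real (Suc M + N)"] a iln_deriv ee_anti by auto
    then show ?case using Suc by simp
  qed
  define B where "B = suminf (\<lambda>m. ee k (real (m + N))) + iln k (real N) + 1"
  have "eventually (\<lambda>x. iln k x \<ge> B) at_top" using iln_at_top[of k] by (simp add: filterlim_at_top)
  then obtain x0 where x0: "\<And>x. x \<ge> x0 \<Longrightarrow> iln k x \<ge> B" by (auto simp: eventually_at_top_linorder)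
  define M where "M = nat \<lceil>x0\<rceil>"
  have "real (M + N) \<ge> x0" unfolding M_def by linarith
  then have "iln k (real (M + N)) \<ge> B" using x0 by simp
  moreover have "(\<Sum>m<M. ee k (real (m + N))) \<le> suminf (\<lambda>m. ee k (real (m + N)))"
    using sm2 by (intro sum_le_suminf) (auto simp: ee_def)
  ultimately show False using tele[of M] unfolding B_def by linarith
qed



lemma ee_le_ee1: "1 \<le> j \<Longrightarrow> tw j < x \<Longrightarrow> ee j x \<le> ee 1 x"
proof -
  assume j: "1 \<le> j" "tw j < x"
  have "S 1 x \<le> S j x" unfolding S_def
  proof (rule sum_mono2)
    fix b assume "b \<in> {1..j} - {1..1}"
    then have "b \<le> j" by auto
    then have "tw b < x" using tw_mono[of b j] j by linarith
    then show "0 \<le> iln b x" using iln_pos[of b x] by simp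
  qed (use j in auto)
  then show ?thesis by (simp add: ee_def)
qed

lemma ee1: "0 < x \<Longrightarrow> ee 1 x = 1 / x"
  by (simp add: ee_def S_def exp_minus inverse_eq_divide)

lemma S_upper: "tw (Suc K) < x \<Longrightarrow> S (Suc K) x \<le> ln x + real K * ln (ln x)"
proof (induction K)
  case 0 then show ?case by (simp add: S_def)
next
  case (Suc K)
  have a: "tw (Suc K) < x" using Suc.prems tw_Suc_ge[of "Suc K"] by linarith
  have px: "tw (Suc (Suc K)) < x" by (rule Suc.prems)
  have chain: "iln (Suc j) x \<le> iln 1 x" if "j \<le> Suc K" for j
    using that
  proof (induction j)
    case 0 then show ?case by simp
  next
    case (Suc j)
    have "tw (Suc (Suc j)) \<le> tw (Suc (Suc K))" using Suc.prems by (intro tw_mono) simp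
    then have "tw (Suc (Suc j)) < x" using px by linarith
    then have "iln (Suc (Suc j)) x \<le> iln (Suc j) x" by (rule iln_Suc_le)
    with Suc show ?case by simp
  qed
  have le: "iln (Suc K) x \<le> ln x" using chain[of K] by simp
  have p: "0 < iln (Suc K) x" using iln_pos a by blast
  have l2: "iln (Suc (Suc K)) x \<le> ln (ln x)"
    using ln_mono[OF le p] by (simp only: iln.simps)
  have e: "S (Suc (Suc K)) x = S (Suc K) x + iln (Suc (Suc K)) x" by (rule S_Suc)
  have r: "real (Suc K) * ln (ln x) = real K * ln (ln x) + ln (ln x)" by (simp add: algebra_simps)
  show ?case using Suc.IH[OF a] l2 e r by linarith
qed

lemma trans_analytic:
  fixes lam mu :: "nat \<Rightarrow> real"
  assumes pos: "\<And>n. lam n > 0" "\<And>n. mu n > 0"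
    and c: "c > 1"
    and hyp: "\<And>n. n \<ge> N \<Longrightarrow> lam n / mu n \<ge> 1 + (\<Sum>j=1..K. ee j (real n)) + c * ee (Suc K) (real n)"
  shows "summable (rho lam mu)"
proof -
  have rp: "rho lam mu n > 0" for n by (rule rho_pos[of lam mu]) (use pos in auto)
  define c' where "c' = (1 + c) / 2"
  have c': "1 < c'" "c' < c" using c by (auto simp: c'_def)
  define a where "a = tw (Suc K)"
  define F where "F x = S K x + c' * iln (Suc K) x" for x
  define D where "D x = (\<Sum>j=1..K. ee j x) + c' * ee (Suc K) x" for x
  have Fd: "(F has_real_derivative D x) (at x)" if "a < x" for x
  proof -
    have "tw K < x" using that tw_mono[of K "Suc K"] unfolding a_def by simp
    then have "((\<lambda>x. S K x + c' * iln (Suc K) x) has_real_derivative (\<Sum>j=1..K. ee j x) + c' * ee (Suc K) x) (at x)"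
      using that unfolding a_def
      by (intro DERIV_add DERIV_cmult S_deriv iln_deriv) auto
    then show ?thesis unfolding F_def[abs_def] D_def .
  qed
  have Ddec: "D t \<le> D s" if "a < s" "s \<le> t" for s t
  proof -
    have "tw K < s" using that tw_mono[of K "Suc K"] unfolding a_def by simp
    then have "(\<Sum>j=1..K. ee j t) \<le> (\<Sum>j=1..K. ee j s)" using D_anti that by simp
    moreover have "ee (Suc K) t \<le> ee (Suc K) s" using ee_anti that unfolding a_def by simp
    ultimately show ?thesis unfolding D_def using c' by (simp add: add_mono)
  qed
  define A where "A = real K + c'"
  have Apos: "A > 0" using c' by (simp add: A_def)
  define B where "B = ln ((c - c') / A^2)"
  have ev: "eventually (\<lambda>x. real K * ln (ln x) \<le> ln x + B) at_top" by real_asymp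
  then obtain X where X: "\<And>x. x \<ge> X \<Longrightarrow> real K * ln (ln x) \<le> ln x + B"
    by (auto simp: eventually_at_top_linorder)
  define X' where "X' = max X (max (a + 1) A)"
  have key: "exp (F (x + 1) - F x) \<le> 1 + (\<Sum>j=1..K. ee j x) + c * ee (Suc K) x" if x: "x \<ge> X'" for x
  proof -
    have xa: "a < x" "x \<ge> X" "x \<ge> A" using x unfolding X'_def by auto
    have x0: "x > 0" using xa tw_nonneg[of "Suc K"] unfolding a_def by linarith
    have Dnn: "D x \<ge> 0" unfolding D_def using c' by (auto simp: ee_def intro!: sum_nonneg add_nonneg_nonneg)
    have Dle: "D x \<le> A / x"
    proof -
      have "(\<Sum>j=1..K. ee j x) \<le> (\<Sum>j=1..K. ee 1 x)"
      proof (rule sum_mono)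
        fix j assume "j \<in> {1..K}"
        then show "ee j x \<le> ee 1 x" using ee_le_ee1[of j x] xa tw_mono[of j "Suc K"] unfolding a_def by auto
      qed
      moreover have "ee (Suc K) x \<le> ee 1 x" using ee_le_ee1[of "Suc K" x] xa unfolding a_def by auto
      ultimately have "D x \<le> real K * ee 1 x + c' * ee 1 x" unfolding D_def using c'
        by (simp add: add_mono)
      then have "D x \<le> real K * (1 / x) + c' * (1 / x)" unfolding ee1[OF x0] .
      then show ?thesis using x0 by (simp add: ee1 A_def field_simps)
    qed
    have "A / x \<le> 1" using xa x0 by simp
    then have D1: "D x \<le> 1" using Dle by linarith
    have Sb: "S (Suc K) x \<le> 2 * ln x + B" using S_upper[of K x] X[of x] xa unfolding a_def by simp
    have cc: "(c - c') / A^2 > 0" using c' Apos by simp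
    have "exp (2 * ln x) = exp (ln x + ln x)" by (simp only: mult_2)
    also have "\<dots> = exp (ln x) * exp (ln x)" by (rule exp_add)
    also have "\<dots> = x^2" using x0 by (simp add: power2_eq_square)
    finally have e2: "exp (2 * ln x) = x^2" .
    have eB: "exp B = (c - c') / A^2" using cc by (simp add: B_def)
    have "(c - c') * exp (- (2 * ln x + B)) = (c - c') / (exp (2 * ln x) * exp B)"
      by (simp add: exp_diff exp_minus divide_inverse)
    also have "\<dots> = A^2 / x^2" unfolding e2 eB using x0 c' Apos by (simp add: field_simps)
    finally have "A^2 / x^2 = (c - c') * exp (- (2 * ln x + B))" by simp
    also have "\<dots> \<le> (c - c') * ee (Suc K) x" unfolding ee_def using Sb c' by simp
    finally have "(A / x)^2 \<le> (c - c') * ee (Suc K) x" by (simp add: power_divide)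
    moreover have "(D x)^2 \<le> (A / x)^2" using Dnn Dle by (simp add: power_mono)
    ultimately have DD: "(D x)^2 \<le> (c - c') * ee (Suc K) x" by linarith
    have "F (x + 1) - F x \<le> ((x + 1) - x) * D x"
      using mvt_dec[of a F D x "x + 1"] Fd Ddec xa by auto
    then have "exp (F (x + 1) - F x) \<le> exp (D x)" by simp
    also have "\<dots> \<le> 1 + D x + (D x)^2" using exp_bound Dnn D1 by simp
    also have "\<dots> \<le> 1 + (\<Sum>j=1..K. ee j x) + c * ee (Suc K) x" using DD unfolding D_def
      by (simp add: algebra_simps)
    finally show ?thesis .
  qed
  define N' where "N' = max N (nat \<lceil>X'\<rceil>)"
  have N': "N' \<ge> N" "real N' \<ge> X'" unfolding N'_def by (auto simp: le_max_iff_disj) linarith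
  have step: "lam n / mu n \<ge> exp (F (real n + 1) - F (real n))" if "n \<ge> N'" for n
    using key[of "real n"] hyp[of n] that N' by auto
  define C where "C = rho lam mu N' * exp (F (real N' + 1))"
  have Cpos: "C > 0" using rp by (simp add: C_def)
  have up: "rho lam mu (N' + m) \<le> C * exp (- F (real (N' + m) + 1))" for m
  proof (induction m)
    case 0 then show ?case by (simp add: C_def exp_minus mult.assoc)
  next
    case (Suc m)
    define n where "n = N' + m"
    have r: "lam (Suc n) / mu (Suc n) \<ge> exp (F (real (Suc n) + 1) - F (real (Suc n)))"
      using step[of "Suc n"] n_def by simp
    have "mu (Suc n) / lam (Suc n) = 1 / (lam (Suc n) / mu (Suc n))" by simp
    also have "\<dots> \<le> 1 / exp (F (real (Suc n) + 1) - F (real (Suc n)))"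
      using r pos(1)[of "Suc n"] pos(2)[of "Suc n"] by (intro divide_left_mono) auto
    finally have q: "mu (Suc n) / lam (Suc n) \<le> exp (F (real (Suc n)) - F (real (Suc n) + 1))"
      by (simp add: exp_diff)
    have "rho lam mu (N' + Suc m) = rho lam mu n * (mu (Suc n) / lam (Suc n))"
      by (simp add: n_def rho_Suc)
    also have "\<dots> \<le> C * exp (- F (real n + 1)) * exp (F (real (Suc n)) - F (real (Suc n) + 1))"
      using Suc.IH q pos(1)[of "Suc n"] pos(2)[of "Suc n"] Cpos unfolding n_def
      by (intro mult_mono) auto
    also have "\<dots> = C * exp (- F (real (N' + Suc m) + 1))"
      by (simp add: n_def mult.assoc exp_add[symmetric] add.commute)
    finally show ?case .
  qed
  define H where "H x = exp ((1 - c') * iln (Suc K) x)" for x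
  have Hd: "((\<lambda>x. - H x) has_real_derivative (c' - 1) * exp (- F x)) (at x)" if "a < x" for x
  proof -
    have "((\<lambda>x. (1 - c') * iln (Suc K) x) has_real_derivative (1 - c') * ee (Suc K) x) (at x)"
      using that unfolding a_def by (intro DERIV_cmult iln_deriv) 
    then have "((\<lambda>x. exp ((1 - c') * iln (Suc K) x)) has_real_derivative exp ((1 - c') * iln (Suc K) x) * ((1 - c') * ee (Suc K) x)) (at x)"
      by (rule DERIV_chain2[OF DERIV_exp])
    then have "((\<lambda>x. - H x) has_real_derivative - (exp ((1 - c') * iln (Suc K) x) * ((1 - c') * ee (Suc K) x))) (at x)"
      unfolding H_def by (rule DERIV_minus)
    moreover have "- (exp ((1 - c') * iln (Suc K) x) * ((1 - c') * ee (Suc K) x)) = (c' - 1) * exp (- F x)"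
      unfolding ee_def F_def S_Suc by (simp add: exp_add[symmetric] algebra_simps)
    ultimately show ?thesis by simp
  qed
  have Fmono: "F s \<le> F t" if "a < s" "s \<le> t" for s t
  proof -
    have "tw K < s" using that tw_mono[of K "Suc K"] unfolding a_def by simp
    then have "S K s \<le> S K t" using S_mono that by simp
    moreover have "iln (Suc K) s \<le> iln (Suc K) t" using iln_mono[of "Suc K" s t] that unfolding a_def by blast
    ultimately show ?thesis unfolding F_def using c' by (simp add: add_mono)
  qed
  have hstep: "exp (- F (x + 1)) \<le> (H x - H (x + 1)) / (c' - 1)" if "a < x" for x
  proof -
    have "((x + 1) - x) * ((c' - 1) * exp (- F (x + 1))) \<le> - H (x + 1) - - H x"
      using mvt_dec[of a "\<lambda>x. - H x" "\<lambda>x. (c' - 1) * exp (- F x)" x "x + 1"] Hd that Fmono c'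
      by auto
    then show ?thesis using c' by (simp add: field_simps)
  qed
  define b where "b m = exp (- F (real (m + N') + 1))" for m
  have aN: "a < real N'" using N' unfolding X'_def by simp
  have sb: "summable b"
  proof (rule summableI_nonneg_bounded)
    show "0 \<le> b m" for m by (simp add: b_def)
    show "(\<Sum>i<M. b i) \<le> H (real N') / (c' - 1)" for M
    proof -
      have "(\<Sum>i<M. b i) \<le> (H (real N') - H (real (M + N'))) / (c' - 1)"
      proof (induction M)
        case 0 then show ?case by simp
      next
        case (Suc M)
        have "b M \<le> (H (real (M + N')) - H (real (M + N') + 1)) / (c' - 1)"
          unfolding b_def using hstep[of "real (M + N')"] aN by simp
        then show ?case using Suc by (simp add: diff_divide_distrib add.commute)
      qed
      also have "\<dots> \<le> H (real N') / (c' - 1)" using c' by (simp add: H_def divide_right_mono)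
      finally show ?thesis .
    qed
  qed
  have "summable (\<lambda>m. rho lam mu (m + N'))"
  proof (rule summable_comparison_test'[where N=0])
    show "summable (\<lambda>m. C * b m)" using sb by (rule summable_mult)
    show "norm (rho lam mu (m + N')) \<le> C * b m" for m
      using up[of m] rp[of "m + N'"] by (simp add: b_def add.commute)
  qed
  then show ?thesis by simp
qed



lemma conv: "tw (Suc K) < x \<Longrightarrow>
  1 / x + (\<Sum>k=1..K. 1 / (x * (\<Prod>j=1..k. iln j x))) = (\<Sum>j=1..Suc K. ee j x)"
proof (induction K)
  case 0
  have "0 < x" using 0 by simp
  then show ?case using ee1 by simp
next
  case (Suc K)
  have a: "tw (Suc K) < x" using Suc.prems tw_Suc_ge[of "Suc K"] by linarith
  have "1 / x + (\<Sum>k=1..Suc K. 1 / (x * (\<Prod>j=1..k. iln j x)))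
      = (1 / x + (\<Sum>k=1..K. 1 / (x * (\<Prod>j=1..k. iln j x)))) + 1 / (x * (\<Prod>j=1..Suc K. iln j x))"
    by (simp add: sum.cl_ivl_Suc)
  also have "\<dots> = (\<Sum>j=1..Suc K. ee j x) + ee (Suc (Suc K)) x"
    using Suc.IH[OF a] inv_prod[OF Suc.prems] by simp
  also have "\<dots> = (\<Sum>j=1..Suc (Suc K). ee j x)" by (simp add: sum.cl_ivl_Suc)
  finally show ?case .
qed

theorem lemma2:
  fixes lam mu :: "nat \<Rightarrow> real"
  assumes pos: "\<And>n. lam n > 0" "\<And>n. mu n > 0"
  shows "((\<exists>c K n0. c > 1 \<and> K \<ge> 1 \<and> (\<forall>n. real n > n0 \<longrightarrow>
            lam n / mu n \<ge> 1 + 1 / real n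
              + (\<Sum>k=1..K-1. 1 / (real n * (\<Prod>j=1..k. iln j (real n))))
              + c / (real n * (\<Prod>k=1..K. iln k (real n)))))
           \<longrightarrow> bd_transient lam mu)
    \<and> ((\<exists>K n0. K \<ge> 1 \<and> (\<forall>n. real n > n0 \<longrightarrow>
            lam n / mu n \<le> 1 + 1 / real n
              + (\<Sum>k=1..K. 1 / (real n * (\<Prod>j=1..k. iln j (real n))))))
           \<longrightarrow> bd_recurrent lam mu)"
proof (intro conjI impI)
  assume "\<exists>c K n0. c > 1 \<and> K \<ge> 1 \<and> (\<forall>n. real n > n0 \<longrightarrow>
            lam n / mu n \<ge> 1 + 1 / real n
              + (\<Sum>k=1..K-1. 1 / (real n * (\<Prod>j=1..k. iln j (real n))))
              + c / (real n * (\<Prod>k=1..K. iln k (real n))))"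
  then obtain c K n0 where c: "c > 1" and K: "K \<ge> 1" and h: "\<And>n. real n > n0 \<Longrightarrow>
            lam n / mu n \<ge> 1 + 1 / real n
              + (\<Sum>k=1..K-1. 1 / (real n * (\<Prod>j=1..k. iln j (real n))))
              + c / (real n * (\<Prod>k=1..K. iln k (real n)))" by blast
  obtain K' where K': "K = Suc K'" using K by (cases K) auto
  define N where "N = Suc (nat \<lceil>max n0 (tw (Suc K))\<rceil>)"
  have N: "real N > n0" "real N > tw (Suc K)" unfolding N_def by linarith+
  have "summable (rho lam mu)"
  proof (rule trans_analytic[OF pos c])
    fix n assume n: "N \<le> n"
    then have n1: "real n > n0" "real n > tw (Suc K)" using N by linarith+
    have "tw (Suc K') \<le> tw (Suc K)" using K' by (intro tw_mono) simp
    then have tK: "tw (Suc K') < real n" using n1 by linarith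
    have "1 / real n + (\<Sum>k=1..K-1. 1 / (real n * (\<Prod>j=1..k. iln j (real n))))
        = (\<Sum>j=1..Suc K'. ee j (real n))" using conv[OF tK] K' by simp
    moreover have "c / (real n * (\<Prod>k=1..K. iln k (real n))) = c * ee (Suc (Suc K')) (real n)"
      using inv_prod[of K "real n"] n1 K' by (simp add: divide_inverse)
    ultimately show "1 + (\<Sum>j=1..Suc K'. ee j (real n)) + c * ee (Suc (Suc K')) (real n) \<le> lam n / mu n"
      using h[OF n1(1)] by simp
  qed
  then show "bd_transient lam mu" by (rule transient_if[OF pos])
next
  assume "\<exists>K n0. K \<ge> 1 \<and> (\<forall>n. real n > n0 \<longrightarrow>
            lam n / mu n \<le> 1 + 1 / real n
              + (\<Sum>k=1..K. 1 / (real n * (\<Prod>j=1..k. iln j (real n)))))"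
  then obtain K n0 where h: "\<And>n. real n > n0 \<Longrightarrow>
            lam n / mu n \<le> 1 + 1 / real n
              + (\<Sum>k=1..K. 1 / (real n * (\<Prod>j=1..k. iln j (real n))))" by blast
  define N where "N = Suc (nat \<lceil>max n0 (tw (Suc K))\<rceil>)"
  have N: "real N > n0" "real N > tw (Suc K)" unfolding N_def by linarith+
  have "\<not> summable (rho lam mu)"
  proof (rule rec_analytic[OF pos N(2)])
    fix n assume n: "N \<le> n"
    then have n1: "real n > n0" "real n > tw (Suc K)" using N by linarith+
    show "lam n / mu n \<le> 1 + (\<Sum>j=1..Suc K. ee j (real n))"
      using h[OF n1(1)] conv[OF n1(2)] by simp
  qed
  then show "bd_recurrent lam mu" by (rule recurrent_if[OF pos])
qed


end
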